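(* Let $s$ satisfy (s1)–(s2). Suppose $p$ is a measurable function on $\Omega$ with $p\le M$ for some finite $M$, and $\rho(x)\in\partial s^*(p(x),x)$ for a.e. $x\in\Omega$. Then $\rho\in L^\infty(\Omega)$ and $\rho p\in L^\infty(\Omega)$, and both bounds depend only on $s$ and $M$.
   Context: $\Omega\subset\mathbb{R}^d$ bounded smooth domain. $s:\mathbb{R}\times\Omega\to\mathbb{R}\cup\{+\infty\}$ with: (s1) $s(\cdot,x)$ proper, lower semicontinuous, convex for every $x$; (s2) $s(z,x)=+\infty$ for $z<0$, $s(0,x)=0$, $\inf_{(z,x)}s(z,x)>-\infty$, and $\lim_{z\to\infty}\inf_{x\in\Omega}s(z,x)/z=+\infty$. $s^*(p,x)=\sup_{z\in\mathbb{R}}(pz-s(z,x))$ and $\partial s^*(p,x)$ is its subdifferential in $p$. *)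

theory Defs
  imports "HOL-Analysis.Analysis"
begin

definition proper_fun :: "(real \<Rightarrow> ereal) \<Rightarrow> bool" where
  "proper_fun f \<longleftrightarrow> (\<exists>z. f z < \<infinity>) \<and> (\<forall>z. f z > -\<infinity>)"

definition lsc_fun :: "(real \<Rightarrow> ereal) \<Rightarrow> bool" where
  "lsc_fun f \<longleftrightarrow> (\<forall>z. f z \<le> Liminf (at z) f)"

definition convex_ext :: "(real \<Rightarrow> ereal) \<Rightarrow> bool" where
  "convex_ext f \<longleftrightarrow> (\<forall>z w t. 0 \<le> t \<and> t \<le> 1 \<longrightarrow>
      f (t * z + (1 - t) * w) \<le> ereal t * f z + ereal (1 - t) * f w)"

definition s_assumptions :: "(real \<Rightarrow> 'a \<Rightarrow> ereal) \<Rightarrow> 'a set \<Rightarrow> bool" where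
  "s_assumptions s \<Omega> \<longleftrightarrow>
     (\<forall>x\<in>\<Omega>. proper_fun (\<lambda>z. s z x) \<and> lsc_fun (\<lambda>z. s z x) \<and> convex_ext (\<lambda>z. s z x)) \<and>
     (\<forall>x\<in>\<Omega>. \<forall>z<0. s z x = \<infinity>) \<and>
     (\<forall>x\<in>\<Omega>. s 0 x = 0) \<and>
     (INF zx\<in>UNIV \<times> \<Omega>. s (fst zx) (snd zx)) > -\<infinity> \<and>
     ((\<lambda>z. (INF x\<in>\<Omega>. s z x) / ereal z) \<longlongrightarrow> \<infinity>) at_top"

definition conj_s :: "(real \<Rightarrow> 'a \<Rightarrow> ereal) \<Rightarrow> real \<Rightarrow> 'a \<Rightarrow> ereal" where
  "conj_s s p x = (SUP z. ereal (p * z) - s z x)"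

definition subdiff_conj :: "(real \<Rightarrow> 'a \<Rightarrow> ereal) \<Rightarrow> real \<Rightarrow> 'a \<Rightarrow> real set" where
  "subdiff_conj s p x =
     {r. \<forall>q. conj_s s q x \<ge> conj_s s p x + ereal (r * (q - p))}"

end

theory Submission
  imports Defs
begin

lemma conj_ge0:
  assumes "s 0 x = 0"
  shows "conj_s s p x \<ge> 0"
proof -
  have "ereal (p * 0) - s 0 x \<le> conj_s s p x" unfolding conj_s_def by (rule SUP_upper) auto
  thus ?thesis using assms by (simp add: zero_ereal_def)
qed

lemma conj_le_B:
  assumes neg: "\<forall>z<0. s z x = \<infinity>" and lb: "\<forall>z. ereal (-B) \<le> s z x" and q: "q \<le> 0"
  shows "conj_s s q x \<le> ereal B"
  unfolding conj_s_def
proof (rule SUP_least)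
  fix z :: real
  show "ereal (q * z) - s z x \<le> ereal B"
  proof (cases "z < 0")
    case True thus ?thesis using neg by simp
  next
    case False
    hence "q * z \<le> 0" using q by (simp add: mult_nonpos_nonneg)
    moreover have "ereal (-B) \<le> s z x" using lb by blast
    ultimately show ?thesis by (cases "s z x") auto
  qed
qed

lemma conj_le_K:
  assumes neg: "\<forall>z<0. s z x = \<infinity>" and lb: "\<forall>z. ereal (-B) \<le> s z x"
    and sup: "\<forall>z\<ge>Z. ereal ((M+2)*z) \<le> s z x" and Z: "Z \<ge> 0" and B: "B \<ge> 0"
    and q: "q \<le> M + 1"
  shows "conj_s s q x \<le> ereal (\<bar>M+1\<bar>*Z + B)"
  unfolding conj_s_def
proof (rule SUP_least)
  fix z :: real
  show "ereal (q * z) - s z x \<le> ereal (\<bar>M+1\<bar>*Z + B)"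
  proof (cases "z < 0")
    case True thus ?thesis using neg by simp
  next
    case False
    hence qz: "q * z \<le> (M+1) * z" using q by (simp add: mult_right_mono)
    show ?thesis
    proof (cases "z \<le> Z")
      case True
      have "(M+1)*z \<le> \<bar>M+1\<bar>*Z" using True False
        by (metis abs_ge_self abs_mult abs_of_nonneg dual_order.trans linorder_not_le mult_mono abs_ge_zero)
      moreover have "ereal (-B) \<le> s z x" using lb by blast
      ultimately show ?thesis using qz by (cases "s z x") auto
    next
      case f2: False
      have "ereal ((M+2)*z) \<le> s z x" using sup f2 by auto
      moreover have "0 \<le> \<bar>M+1\<bar>*Z + B" using Z B by simp
      ultimately show ?thesis using qz False by (cases "s z x") (auto simp: algebra_simps)
    qed
  qed
qed

lemma ereal_aux:
  assumes "0 \<le> a" "a + ereal t \<le> c" "c \<le> ereal b"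
  shows "t \<le> b"
  using assms by (cases a; cases c) auto

lemma key:
  assumes s0: "s 0 x = 0" and neg: "\<forall>z<0. s z x = \<infinity>" and lb: "\<forall>z. ereal (-B) \<le> s z x"
    and sup: "\<forall>z\<ge>Z. ereal ((M+2)*z) \<le> s z x" and Z: "Z \<ge> 0" and B: "B \<ge> 0"
    and p: "p \<le> M" and r: "\<rho> \<in> subdiff_conj s p x"
  shows "0 \<le> \<rho> \<and> \<rho> \<le> \<bar>M+1\<bar>*Z + B \<and> -B \<le> \<rho> * p"
proof -
  have sub: "\<And>q. conj_s s q x \<ge> conj_s s p x + ereal (\<rho> * (q - p))"
    using r unfolding subdiff_conj_def by blast
  have c0: "conj_s s p x \<ge> 0" using conj_ge0 s0 by metis
  have A: "\<rho> * (q - p) \<le> B" if "q \<le> 0" for q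
    using ereal_aux[OF c0 sub[of q] conj_le_B[of s x B q, OF neg lb that]] .
  have r0: "0 \<le> \<rho>"
  proof (rule ccontr)
    assume "\<not> 0 \<le> \<rho>"
    hence rn: "\<rho> < 0" by simp
    define q where "q = - (\<bar>p\<bar> + (B+1)/(-\<rho>))"
    have "(B+1)/(-\<rho>) \<ge> 0" using B rn by (intro divide_nonneg_pos) auto
    hence "q \<le> 0" unfolding q_def by simp
    have "q - p \<le> -((B+1)/(-\<rho>))" unfolding q_def by simp
    hence "(-\<rho>) * (-((B+1)/(-\<rho>))) \<le> (-\<rho>) * (q - p) \<or> True" by simp
    have "(B+1) \<le> (-\<rho>) * (p - q)"
    proof -
      have "(B+1)/(-\<rho>) \<le> p - q" using \<open>q - p \<le> _\<close> by simp
      hence "(B+1)/(-\<rho>) * (-\<rho>) \<le> (p - q) * (-\<rho>)" using rn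
        by (intro mult_right_mono) auto
      thus ?thesis using rn by (simp add: mult.commute)
    qed
    hence "B + 1 \<le> \<rho> * (q - p)" by (simp add: algebra_simps)
    thus False using A[OF \<open>q \<le> 0\<close>] by simp
  qed
  have "\<rho> * (p + 1 - p) \<le> \<bar>M+1\<bar>*Z + B"
    using ereal_aux[OF c0 sub[of "p+1"] conj_le_K[of s x B Z M "p+1", OF neg lb sup Z B]] p by simp
  moreover have "-B \<le> \<rho> * p" using A[of 0] by simp
  ultimately show ?thesis using r0 by simp
qed

theorem lemma2p14:
  fixes s :: "real \<Rightarrow> 'a::euclidean_space \<Rightarrow> ereal" and \<Omega> :: "'a set" and M :: real
  assumes "open \<Omega>" and "bounded \<Omega>" and "connected \<Omega>"
    and "s_assumptions s \<Omega>"
  shows "\<exists>C::real. \<forall>p \<rho> :: 'a \<Rightarrow> real.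
           p \<in> borel_measurable (lebesgue_on \<Omega>) \<longrightarrow>
           \<rho> \<in> borel_measurable (lebesgue_on \<Omega>) \<longrightarrow>
           (AE x in lebesgue_on \<Omega>. p x \<le> M) \<longrightarrow>
           (AE x in lebesgue_on \<Omega>. \<rho> x \<in> subdiff_conj s (p x) x) \<longrightarrow>
           (AE x in lebesgue_on \<Omega>. \<bar>\<rho> x\<bar> \<le> C) \<and>
           (AE x in lebesgue_on \<Omega>. \<bar>\<rho> x * p x\<bar> \<le> C)"
proof -
  note sa = assms(4)[unfolded s_assumptions_def]
  have neg: "\<forall>x\<in>\<Omega>. \<forall>z<0. s z x = \<infinity>" and s0: "\<forall>x\<in>\<Omega>. s 0 x = 0"
    and inf: "(INF zx\<in>UNIV \<times> \<Omega>. s (fst zx) (snd zx)) > -\<infinity>"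
    and lim: "((\<lambda>z. (INF x\<in>\<Omega>. s z x) / ereal z) \<longlongrightarrow> \<infinity>) at_top"
    using sa by auto
  obtain B where B: "B \<ge> 0" "ereal (-B) \<le> (INF zx\<in>UNIV \<times> \<Omega>. s (fst zx) (snd zx))"
  proof (cases "(INF zx\<in>UNIV \<times> \<Omega>. s (fst zx) (snd zx))")
    case (real r) thus ?thesis using that[of "max 0 (-r)"] by auto
  next
    case PInf thus ?thesis using that[of 0] by auto
  next
    case MInf thus ?thesis using inf by auto
  qed
  have lb: "\<forall>z. ereal (-B) \<le> s z x" if "x \<in> \<Omega>" for x
  proof
    fix z
    have "(INF zx\<in>UNIV \<times> \<Omega>. s (fst zx) (snd zx)) \<le> s (fst (z,x)) (snd (z,x))"
      by (rule INF_lower) (use that in auto)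
    thus "ereal (-B) \<le> s z x" using B(2) by simp
  qed
  have "eventually (\<lambda>z. ereal (M+2) < (INF x\<in>\<Omega>. s z x) / ereal z) at_top"
    using order_tendstoD(1)[OF lim] by simp
  then obtain N where N: "\<And>z. z \<ge> N \<Longrightarrow> ereal (M+2) < (INF x\<in>\<Omega>. s z x) / ereal z"
    unfolding eventually_at_top_linorder by blast
  define Z where "Z = max N 1"
  have Z: "Z \<ge> 0" unfolding Z_def by simp
  have sup: "\<forall>z\<ge>Z. ereal ((M+2)*z) \<le> s z x" if "x \<in> \<Omega>" for x
  proof (intro allI impI)
    fix z assume "Z \<le> z"
    hence zpos: "z > 0" and "z \<ge> N" unfolding Z_def by auto
    hence lt: "ereal (M+2) < (INF x\<in>\<Omega>. s z x) / ereal z" using N by blast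
    have "ereal ((M+2)*z) \<le> (INF x\<in>\<Omega>. s z x)"
    proof (cases "(INF x\<in>\<Omega>. s z x)")
      case (real r)
      hence "M + 2 < r / z" using lt zpos by simp
      hence "(M+2)*z < r" using zpos by (simp add: less_divide_eq)
      thus ?thesis using real by simp
    next
      case PInf thus ?thesis by simp
    next
      case MInf thus ?thesis using lt zpos by simp
    qed
    also have "\<dots> \<le> s z x" by (rule INF_lower) fact
    finally show "ereal ((M+2)*z) \<le> s z x" .
  qed
  define K where "K = \<bar>M+1\<bar>*Z + B"
  have K0: "K \<ge> 0" unfolding K_def using Z B by simp
  show ?thesis
  proof (intro exI[of _ "max K (max B (K * \<bar>M\<bar>))"] allI impI conjI)
    fix p \<rho> :: "'a \<Rightarrow> real"
    assume pM: "AE x in lebesgue_on \<Omega>. p x \<le> M"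
      and rs: "AE x in lebesgue_on \<Omega>. \<rho> x \<in> subdiff_conj s (p x) x"
    have sp: "AE x in lebesgue_on \<Omega>. x \<in> \<Omega>" by (rule AE_I2) simp
    have main: "AE x in lebesgue_on \<Omega>. 0 \<le> \<rho> x \<and> \<rho> x \<le> K \<and> -B \<le> \<rho> x * p x \<and> p x \<le> M"
      using pM rs sp
    proof eventually_elim
      case (elim x)
      thus ?case using key[OF s0[rule_format, OF elim(3)] bspec[OF neg elim(3)]
           lb[OF elim(3)] sup[OF elim(3)] Z B(1) elim(1) elim(2)] unfolding K_def by auto
    qed
    show "AE x in lebesgue_on \<Omega>. \<bar>\<rho> x\<bar> \<le> max K (max B (K * \<bar>M\<bar>))"
      using main by eventually_elim auto
    show "AE x in lebesgue_on \<Omega>. \<bar>\<rho> x * p x\<bar> \<le> max K (max B (K * \<bar>M\<bar>))"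
      using main
    proof eventually_elim
      case (elim x)
      have "\<rho> x * p x \<le> \<rho> x * \<bar>M\<bar>" using elim by (intro mult_left_mono) auto
      also have "\<dots> \<le> K * \<bar>M\<bar>" using elim by (intro mult_right_mono) auto
      finally show ?case using elim by auto
    qed
  qed
qed

end
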